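(* Assume (H1), (H2). Let $L\in\mathbb R$ and $\lambda_\infty>\|f'\circ\varphi\|_{L^\infty}$. Then for every $s\in(-\infty,L]$, $\mathbb E^u_-(s,\lambda_\infty)\cap\ell_*^{sand}=\{0\}$; consequently the Maslov index of $s\mapsto\mathbb E^u_-(s,\lambda_\infty)$, $s\in[-\infty,L]$, with respect to $\ell_*^{sand}$ is zero.
   Context: Fix real $\nu,\mu$ and $f(u)=\nu u^2-u^3-\mu u$. (H1): $\varphi$ is a smooth stationary solution of $u_t=-(1+\partial_x^2)^2u+f(u)$ with $\varphi(x)\to0$ as $x\to\pm\infty$. (H2): $f'(0)<0$. $B(x,\lambda)=\begin{pmatrix}0&0&0&1\\0&0&1&-2\\-\lambda-1+f'(\varphi(x))&0&0&0\\0&1&0&0\end{pmatrix}$ is the coefficient matrix of the first-order form of $(-\partial_x^4-2\partial_x^2-1+f'(\varphi))u=\lambda u$ in the variables $q=(u,u_{xx},u_{xxx}+2u_x,u_x)$. $\mathbb E^u_-(x,\lambda)$ is the set of values $q(x)$ of solutions of $q'=B(y,\lambda)q$ with $q(y)\to0$ as $y\to-\infty$; at $x=-\infty$ it is defined as the unstable spectral subspace of $B_\infty(\lambda)=\lim_{x\to\pm\infty}B(x,\lambda)$. $\ell_*^{sand}=\{q\in\mathbb R^4:q_1=q_4=0\}$. The Maslov index is the signed count of crossings of the path with the reference plane. *)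

theory Defs
  imports "HOL-Analysis.Analysis"
begin

definition SH_f :: "real \<Rightarrow> real \<Rightarrow> real \<Rightarrow> real" where
  "SH_f \<nu> \<mu> u = \<nu> * u^2 - u^3 - \<mu> * u"

text \<open>Coefficient matrix B(x,lambda) of the first-order system in q = (u, u_xx, u_xxx + 2u_x, u_x);
  entry (i,j) is row i, column j.  The potential is f'(phi x).\<close>
definition SH_B :: "real \<Rightarrow> real \<Rightarrow> (real \<Rightarrow> real) \<Rightarrow> real \<Rightarrow> real \<Rightarrow> real^4^4" where
  "SH_B \<nu> \<mu> \<phi> x lam = vector [
     vector [0, 0, 0, 1],
     vector [0, 0, 1, -2],
     vector [- lam - 1 + deriv (SH_f \<nu> \<mu>) (\<phi> x), 0, 0, 0],
     vector [0, 1, 0, 0]]"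

text \<open>Asymptotic matrix B_infinity(lambda) = lim_{x -> +-infinity} B(x,lambda) (phi -> 0).\<close>
definition SH_B_inf :: "real \<Rightarrow> real \<Rightarrow> real \<Rightarrow> real^4^4" where
  "SH_B_inf \<nu> \<mu> lam = vector [
     vector [0, 0, 0, 1],
     vector [0, 0, 1, -2],
     vector [- lam - 1 + deriv (SH_f \<nu> \<mu>) 0, 0, 0, 0],
     vector [0, 1, 0, 0]]"

definition SH_Eu :: "real \<Rightarrow> real \<Rightarrow> (real \<Rightarrow> real) \<Rightarrow> real \<Rightarrow> real \<Rightarrow> (real^4) set" where
  "SH_Eu \<nu> \<mu> \<phi> x lam =
     {q x | q. (\<forall>y. (q has_vector_derivative (SH_B \<nu> \<mu> \<phi> y lam *v q y)) (at y))
               \<and> (q \<longlongrightarrow> 0) at_bot}"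

definition cvec :: "real^'n \<Rightarrow> complex^'n" where
  "cvec v = (\<chi> i. complex_of_real (v $ i))"

definition cmat :: "real^'n^'m \<Rightarrow> complex^'n^'m" where
  "cmat A = (\<chi> i j. complex_of_real (A $ i $ j))"

definition unstable_subspace :: "real^'n^'n \<Rightarrow> (real^'n) set" where
  "unstable_subspace A = {v. \<exists>S w. finite S \<and>
      (\<forall>z\<in>S. Re z > 0 \<and> ((\<lambda>u. cmat A *v u - z *s u) ^^ CARD('n)) (w z) = 0) \<and>
      cvec v = (\<Sum>z\<in>S. w z)}"

definition ell_sand :: "(real^4) set" where
  "ell_sand = {q. q $ 1 = 0 \<and> q $ 4 = 0}"

end

theory Submission imports Defs begin
lemma vector_4 [simp]:
 "(vector [x1,x2,x3,x4] ::('a::zero)^4)$1 = x1"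
 "(vector [x1,x2,x3,x4] ::('a::zero)^4)$2 = x2"
 "(vector [x1,x2,x3,x4] ::('a::zero)^4)$3 = x3"
 "(vector [x1,x2,x3,x4] ::('a::zero)^4)$4 = x4"
  unfolding vector_def by simp_all

definition Mc :: "real \<Rightarrow> real^4^4" where
  "Mc c = vector [
     vector [0, 0, 0, 1],
     vector [0, 0, 1, -2],
     vector [c, 0, 0, 0],
     vector [0, 1, 0, 0]]"

lemma Mc_mult: "(Mc c *v q) = vector [q$4, q$3 - 2 * q$4, c * q$1, q$2]"
  by (simp add: vec_eq_iff forall_4 Mc_def matrix_vector_mult_def sum_4)

lemma comp_deriv:
  assumes "(q has_vector_derivative D) (at y)"
  shows "((\<lambda>x. q x $ i) has_real_derivative D $ i) (at y)"
  using bounded_linear.has_vector_derivative[OF bounded_linear_vec_nth assms]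
  by (simp add: has_real_derivative_iff_has_vector_derivative)

lemma cont_left_zero:
  fixes g :: "real \<Rightarrow> real"
  assumes "isCont g s" "\<And>x. x < s \<Longrightarrow> g x = 0"
  shows "g s = 0"
proof -
  have "(g \<longlongrightarrow> g s) (at_left s)" using assms(1)
    by (simp add: filterlim_at_split isCont_def)
  moreover have "(g \<longlongrightarrow> 0) (at_left s)"
  proof (rule tendsto_eventually)
    show "\<forall>\<^sub>F x in at_left s. g x = 0"
      using eventually_at_left_real[of "s - 1" s] by (rule eventually_mono) (auto intro: assms(2))
  qed
  ultimately show ?thesis using tendsto_unique trivial_limit_at_left_real by blast
qed

lemma lyap:
  fixes q :: "real \<Rightarrow> real^4" and c :: "real \<Rightarrow> real"
  assumes der: "\<And>y. (q has_vector_derivative (Mc (c y) *v q y)) (at y)"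
    and cneg: "\<And>y. c y < -1"
    and lim: "(q \<longlongrightarrow> 0) at_bot"
    and s1: "q s $ 1 = 0" and s4: "q s $ 4 = 0"
  shows "q s = 0"
proof -
  define H where "H x = q x $ 1 * q x $ 3 - q x $ 4 * q x $ 2 - 2 * q x $ 1 * q x $ 4" for x
  have d1: "((\<lambda>x. q x $ 1) has_real_derivative q y $ 4) (at y)" for y
    using comp_deriv[OF der[of y], of 1] by (simp add: Mc_mult)
  have d2: "((\<lambda>x. q x $ 2) has_real_derivative q y $ 3 - 2 * q y $ 4) (at y)" for y
    using comp_deriv[OF der[of y], of 2] by (simp add: Mc_mult)
  have d3: "((\<lambda>x. q x $ 3) has_real_derivative c y * q y $ 1) (at y)" for y
    using comp_deriv[OF der[of y], of 3] by (simp add: Mc_mult)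
  have d4: "((\<lambda>x. q x $ 4) has_real_derivative q y $ 2) (at y)" for y
    using comp_deriv[OF der[of y], of 4] by (simp add: Mc_mult)
  have dH: "(H has_real_derivative (c y + 1) * (q y $ 1)^2 - (q y $ 1 + q y $ 2)^2) (at y)" for y
  proof -
    have "(H has_real_derivative
        (q y $ 4 * q y $ 3 + q y $ 1 * (c y * q y $ 1))
        - (q y $ 2 * q y $ 2 + q y $ 4 * (q y $ 3 - 2 * q y $ 4))
        - (2 * q y $ 4 * q y $ 4 + 2 * q y $ 1 * q y $ 2)) (at y)"
      unfolding H_def[abs_def]
      by (rule derivative_eq_intros d1 d2 d3 d4 refl)+ (simp add: algebra_simps)
    moreover have "(q y $ 4 * q y $ 3 + q y $ 1 * (c y * q y $ 1))
        - (q y $ 2 * q y $ 2 + q y $ 4 * (q y $ 3 - 2 * q y $ 4))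
        - (2 * q y $ 4 * q y $ 4 + 2 * q y $ 1 * q y $ 2)
        = (c y + 1) * (q y $ 1)^2 - (q y $ 1 + q y $ 2)^2"
      by (simp add: algebra_simps power2_eq_square)
    ultimately show ?thesis by simp
  qed
  have dHle: "(c y + 1) * (q y $ 1)^2 - (q y $ 1 + q y $ 2)^2 \<le> 0" for y
  proof -
    have "(c y + 1) * (q y $ 1)^2 \<le> 0"
      using cneg[of y] by (intro mult_nonpos_nonneg) auto
    then show ?thesis by (smt (verit) zero_le_power2)
  qed
  have mono: "H b \<le> H a" if "a \<le> b" for a b
    using DERIV_nonpos_imp_nonincreasing[OF that] dH dHle by blast
  have Hlim: "(H \<longlongrightarrow> 0) at_bot"
  proof -
    have "((\<lambda>x. q x $ i) \<longlongrightarrow> 0) at_bot" for i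
      using tendsto_vec_nth[OF lim, of i] by simp
    then have "(H \<longlongrightarrow> 0 * 0 - 0 * 0 - 2 * 0 * 0) at_bot"
      unfolding H_def[abs_def] by (intro tendsto_intros)
    then show ?thesis by simp
  qed
  have Hs: "H s = 0" using s1 s4 by (simp add: H_def)
  have H0: "H x = 0" if "x \<le> s" for x
  proof -
    have "H x \<ge> 0" using mono[OF that] Hs by simp
    moreover have "H x \<le> 0"
    proof (rule tendsto_lowerbound[OF Hlim])
      show "\<forall>\<^sub>F t in at_bot. H t \<ge> H x"
        unfolding eventually_at_bot_linorder by (auto intro!: exI[of _ x] mono)
    qed simp
    ultimately show ?thesis by simp
  qed
  have z12: "q x $ 1 = 0 \<and> q x $ 2 = 0" if "x < s" for x
  proof -
    have "(c x + 1) * (q x $ 1)^2 - (q x $ 1 + q x $ 2)^2 = 0"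
    proof (rule DERIV_local_const[OF dH, of "s - x"])
      show "0 < s - x" using that by simp
      show "\<forall>y. \<bar>x - y\<bar> < s - x \<longrightarrow> H x = H y"
        using that by (auto simp: H0)
    qed
    moreover have "(c x + 1) * (q x $ 1)^2 \<le> 0"
      using cneg[of x] by (intro mult_nonpos_nonneg) auto
    ultimately have a: "(c x + 1) * (q x $ 1)^2 = 0" and b: "(q x $ 1 + q x $ 2)^2 = 0"
      by (smt (verit) zero_le_power2)+
    from a cneg[of x] have "q x $ 1 = 0" by simp
    with b show ?thesis by simp
  qed
  have z4: "q x $ 4 = 0" if "x < s" for x
  proof (rule DERIV_local_const[OF d1, of "s - x"])
    show "0 < s - x" using that by simp
    show "\<forall>y. \<bar>x - y\<bar> < s - x \<longrightarrow> q x $ 1 = q y $ 1"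
      using that z12 by (auto simp: abs_if split: if_splits)
  qed
  have z3: "q x $ 3 = 0" if "x < s" for x
  proof -
    have "q x $ 3 - 2 * q x $ 4 = 0"
    proof (rule DERIV_local_const[OF d2, of "s - x"])
      show "0 < s - x" using that by simp
      show "\<forall>y. \<bar>x - y\<bar> < s - x \<longrightarrow> q x $ 2 = q y $ 2"
        using that z12 by (auto simp: abs_if split: if_splits)
    qed
    then show ?thesis using z4[OF that] by simp
  qed
  have "q s $ 2 = 0"
    by (rule cont_left_zero[OF DERIV_isCont[OF d2]]) (use z12 in auto)
  moreover have "q s $ 3 = 0"
    by (rule cont_left_zero[OF DERIV_isCont[OF d3]]) (use z3 in auto)
  ultimately show ?thesis using s1 s4 by (simp add: vec_eq_iff forall_4)
qed

definition NN :: "real \<Rightarrow> complex \<Rightarrow> complex^4 \<Rightarrow> complex^4" where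
  "NN c z w = cmat (Mc c) *v w - z *s w"

lemma NN_comp:
  "NN c z w $ 1 = w$4 - z * w$1"
  "NN c z w $ 2 = w$3 - 2 * w$4 - z * w$2"
  "NN c z w $ 3 = of_real c * w$1 - z * w$3"
  "NN c z w $ 4 = w$2 - z * w$4"
  by (simp_all add: NN_def cmat_def Mc_def matrix_vector_mult_def sum_4)

lemma kerN:
  assumes "NN c z w = 0"
  shows "w$2 = z^2 * w$1 \<and> w$3 = (z^3 + 2*z) * w$1 \<and> w$4 = z * w$1
    \<and> (z^4 + 2*z^2 - of_real c) * w$1 = 0"
proof -
  have e: "w$4 - z * w$1 = 0" "w$3 - 2 * w$4 - z * w$2 = 0"
     "of_real c * w$1 - z * w$3 = 0" "w$2 - z * w$4 = 0"
    using assms by (metis NN_comp zero_index)+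
  show ?thesis using e by algebra
qed

lemma ker2:
  assumes c: "c < -1" and h: "NN c z (NN c z w) = 0"
  shows "NN c z w = 0"
proof -
  define y where "y = NN c z w"
  have k: "y$2 = z^2 * y$1 \<and> y$3 = (z^3 + 2*z) * y$1 \<and> y$4 = z * y$1
    \<and> (z^4 + 2*z^2 - of_real c) * y$1 = 0"
    using kerN[OF h] unfolding y_def .
  have yc: "y$1 = w$4 - z * w$1" "y$2 = w$3 - 2 * w$4 - z * w$2"
     "y$3 = of_real c * w$1 - z * w$3" "y$4 = w$2 - z * w$4"
    unfolding y_def NN_comp by simp_all
  have id: "(z^4 + 2*z^2 - of_real c) * w$1 + (4*z^3 + 4*z) * y$1 = 0"
    using k yc by algebra
  have "y$1 = 0"
  proof (rule ccontr)
    assume y1: "y$1 \<noteq> 0"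
    then have p: "z^4 + 2*z^2 - of_real c = 0" using k by simp
    with id y1 have "4*z^3 + 4*z = 0" by simp
    then have "z * (z^2 + 1) = 0" by algebra
    then have "z = 0 \<or> z^2 + 1 = 0" by simp
    then have "z = 0 \<or> z^2 = -1" by (metis add_eq_0_iff2 add.commute)
    then show False
    proof
      assume "z = 0" with p c show False by simp
    next
      assume z2: "z^2 = -1"
      have "z^4 = (z^2)^2" by simp
      with z2 p have "(complex_of_real (-1 - c)) = 0" by simp
      with c show False by (simp del: of_real_diff of_real_minus)
    qed
  qed
  then have "y = 0" using k by (simp add: vec_eq_iff forall_4)
  then show ?thesis unfolding y_def .
qed

lemma roots_pair:
  fixes z1 z2 :: complex
  assumes p1: "z1^4 + 2*z1^2 - of_real c = 0" and p2: "z2^4 + 2*z2^2 - of_real c = 0"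
    and r1: "Re z1 > 0" and r2: "Re z2 > 0" and ne: "z1 \<noteq> z2"
  shows "z1^2 + z2^2 = -2"
proof -
  have "z1^2 \<noteq> z2^2"
  proof
    assume "z1^2 = z2^2"
    then have "(z1 - z2) * (z1 + z2) = 0" by (simp add: algebra_simps power2_eq_square)
    moreover have "z1 + z2 \<noteq> 0" using r1 r2 by (metis add_pos_pos zero_complex.simps(1) plus_complex.simps(1) less_irrefl)
    ultimately show False using ne by simp
  qed
  moreover have "(z1^2 - z2^2) * (z1^2 + z2^2 + 2) = 0"
    using p1 p2 by algebra
  ultimately have "z1^2 + z2^2 + 2 = 0" by simp
  then show ?thesis by algebra
qed

lemma unstable_zero:
  assumes c: "c < -1"
  shows "unstable_subspace (Mc c) \<inter> ell_sand = {0}"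
proof -
  have "v = 0" if v: "v \<in> unstable_subspace (Mc c)" "v \<in> ell_sand" for v
  proof -
    obtain S w where fin: "finite S"
      and Sw: "\<And>z. z \<in> S \<Longrightarrow> Re z > 0 \<and> ((NN c z) ^^ 4) (w z) = 0"
      and sum: "cvec v = (\<Sum>z\<in>S. w z)"
      using v(1) unfolding unstable_subspace_def NN_def[abs_def] by auto
    define p where "p z = z^4 + 2*z^2 - complex_of_real c" for z
    have eig: "w z $ 2 = z^2 * w z $ 1 \<and> w z $ 3 = (z^3 + 2*z) * w z $ 1 \<and> w z $ 4 = z * w z $ 1
      \<and> p z * w z $ 1 = 0" if "z \<in> S" for z
    proof -
      have "NN c z (NN c z (NN c z (NN c z (w z)))) = 0"
        using Sw[OF that] by (simp add: numeral_eq_Suc)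
      then have "NN c z (w z) = 0" using ker2[OF c] by blast
      from kerN[OF this] show ?thesis unfolding p_def by simp
    qed
    have v14: "v $ 1 = 0" "v $ 4 = 0" using v(2) by (auto simp: ell_sand_def)
    have s1: "(\<Sum>z\<in>S. w z $ 1) = 0"
      using arg_cong[OF sum, of "\<lambda>x. x $ 1"] v14 by (simp add: cvec_def)
    have s4: "(\<Sum>z\<in>S. z * w z $ 1) = 0"
      using arg_cong[OF sum, of "\<lambda>x. x $ 4"] v14 eig by (simp add: cvec_def)
    define S' where "S' = {z\<in>S. w z $ 1 \<noteq> 0}"
    have S'S: "S' \<subseteq> S" and finS': "finite S'" using fin by (auto simp: S'_def)
    have s1': "(\<Sum>z\<in>S'. w z $ 1) = 0"
      using s1 sum.mono_neutral_right[OF fin S'S, of "\<lambda>z. w z $ 1"] by (auto simp: S'_def)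
    have s4': "(\<Sum>z\<in>S'. z * w z $ 1) = 0"
      using s4 sum.mono_neutral_right[OF fin S'S, of "\<lambda>z. z * w z $ 1"] by (auto simp: S'_def)
    have rootS': "p z = 0 \<and> Re z > 0" if "z \<in> S'" for z
      using that eig Sw by (auto simp: S'_def)
    have pair: "z1^2 + z2^2 = -2" if "z1 \<in> S'" "z2 \<in> S'" "z1 \<noteq> z2" for z1 z2
      using roots_pair[of z1 c z2] rootS'[OF that(1)] rootS'[OF that(2)] that(3)
      unfolding p_def by blast
    have S'e: "S' = {}"
    proof (rule ccontr)
      assume "S' \<noteq> {}"
      then obtain z0 where z0: "z0 \<in> S'" by auto
      show False
      proof (cases "S' = {z0}")
        case True
        then show False using s1' z0 unfolding S'_def by auto
      next
        case False
        then obtain z1 where z1: "z1 \<in> S'" "z1 \<noteq> z0" using z0 by auto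
        have "S' = {z0, z1}"
        proof
          show "S' \<subseteq> {z0, z1}"
          proof
            fix z assume z: "z \<in> S'"
            show "z \<in> {z0, z1}"
            proof (rule ccontr)
              assume "z \<notin> {z0, z1}"
              then have "z0^2 + z^2 = -2" "z0^2 + z1^2 = -2"
                using pair z z0 z1 by auto
              then have "z^2 = z1^2" by (metis add_left_cancel)
              then have "(z - z1) * (z + z1) = 0" by (simp add: algebra_simps power2_eq_square)
              moreover have "Re (z + z1) > 0" using rootS'[OF z] rootS'[OF z1(1)] by simp
              then have "z + z1 \<noteq> 0" by (metis less_irrefl zero_complex.simps(1))
              ultimately have "z = z1" by simp
              then show False using \<open>z \<notin> {z0, z1}\<close> by simp
            qed
          qed
        qed (use z0 z1 in auto)
        then have a: "w z0 $ 1 + w z1 $ 1 = 0" "z0 * w z0 $ 1 + z1 * w z1 $ 1 = 0"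
          using s1' s4' z1 by auto
        then have "(z1 - z0) * w z1 $ 1 = 0" by algebra
        then have "w z1 $ 1 = 0" using z1 by simp
        then show False using z1 by (simp add: S'_def)
      qed
    qed
    have "w z = 0" if "z \<in> S" for z
    proof -
      have "w z $ 1 = 0" using S'e that by (auto simp: S'_def)
      then show ?thesis using eig[OF that] by (simp add: vec_eq_iff forall_4)
    qed
    then have "cvec v = 0" using sum by simp
    then show "v = 0" by (simp add: cvec_def vec_eq_iff)
  qed
  moreover have "0 \<in> unstable_subspace (Mc c)"
    unfolding unstable_subspace_def by (auto intro!: exI[of _ "{}"] simp: cvec_def vec_eq_iff)
  moreover have "(0::real^4) \<in> ell_sand" by (simp add: ell_sand_def)
  ultimately show ?thesis by blast
qed

lemma deriv_f: "deriv (SH_f \<nu> \<mu>) x = 2 * \<nu> * x - 3 * x^2 - \<mu>"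
proof (rule DERIV_imp_deriv)
  show "(SH_f \<nu> \<mu> has_real_derivative 2 * \<nu> * x - 3 * x^2 - \<mu>) (at x)"
    unfolding SH_f_def[abs_def]
    by (rule derivative_eq_intros refl)+ (simp add: algebra_simps power2_eq_square)
qed

lemma B_Mc: "SH_B \<nu> \<mu> \<phi> x lam = Mc (- lam - 1 + deriv (SH_f \<nu> \<mu>) (\<phi> x))"
  by (simp add: SH_B_def Mc_def)

lemma Binf_Mc: "SH_B_inf \<nu> \<mu> lam = Mc (- lam - 1 + deriv (SH_f \<nu> \<mu>) 0)"
  by (simp add: SH_B_inf_def Mc_def)

lemma bounded_lim:
  fixes \<phi> :: "real \<Rightarrow> real"
  assumes cont: "continuous_on UNIV \<phi>" and t: "(\<phi> \<longlongrightarrow> 0) at_top" and b: "(\<phi> \<longlongrightarrow> 0) at_bot"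
  shows "\<exists>B. \<forall>x. \<bar>\<phi> x\<bar> \<le> B"
proof -
  have "\<forall>\<^sub>F x in at_top. \<bar>\<phi> x\<bar> < 1"
    using t by (simp add: tendsto_iff dist_real_def) 
  then obtain b1 where b1: "\<And>x. x \<ge> b1 \<Longrightarrow> \<bar>\<phi> x\<bar> < 1" by (auto simp: eventually_at_top_linorder)
  have "\<forall>\<^sub>F x in at_bot. \<bar>\<phi> x\<bar> < 1"
    using b by (simp add: tendsto_iff dist_real_def)
  then obtain a1 where a1: "\<And>x. x \<le> a1 \<Longrightarrow> \<bar>\<phi> x\<bar> < 1" by (auto simp: eventually_at_bot_linorder)
  have "compact (\<phi> ` {a1..b1})"
    by (rule compact_continuous_image) (use cont continuous_on_subset in auto)
  then obtain K where K: "\<And>y. y \<in> \<phi> ` {a1..b1} \<Longrightarrow> norm y \<le> K"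
    using compact_imp_bounded bounded_iff by metis
  have "\<bar>\<phi> x\<bar> \<le> max 1 K" for x
  proof (cases "x \<le> a1 \<or> x \<ge> b1")
    case True then show ?thesis using a1 b1 by (smt (verit))
  next
    case False then have "x \<in> {a1..b1}" by auto
    then show ?thesis using K[of "\<phi> x"] by auto
  qed
  then show ?thesis by blast
qed

theorem proposition3:
  fixes \<nu> \<mu> L lam_inf :: real and \<phi> :: "real \<Rightarrow> real"
  assumes H1_smooth: "\<forall>k x. ((deriv ^^ k) \<phi>) differentiable (at x)"
    and H1_stationary: "\<forall>x. - ((deriv ^^ 4) \<phi> x + 2 * (deriv ^^ 2) \<phi> x + \<phi> x)
                               + SH_f \<nu> \<mu> (\<phi> x) = 0"
    and H1_top: "(\<phi> \<longlongrightarrow> 0) at_top"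
    and H1_bot: "(\<phi> \<longlongrightarrow> 0) at_bot"
    and H2: "deriv (SH_f \<nu> \<mu>) 0 < 0"
    and lam: "lam_inf > (SUP x. \<bar>deriv (SH_f \<nu> \<mu>) (\<phi> x)\<bar>)"
  shows "(\<forall>s\<le>L. SH_Eu \<nu> \<mu> \<phi> s lam_inf \<inter> ell_sand = {0})
       \<and> unstable_subspace (SH_B_inf \<nu> \<mu> lam_inf) \<inter> ell_sand = {0}"
proof -
  define V where "V x = deriv (SH_f \<nu> \<mu>) (\<phi> x)" for x
  have cont: "continuous_on UNIV \<phi>"
    using H1_smooth by (metis continuous_at_imp_continuous_on differentiable_imp_continuous_within funpow_0)
  obtain B where B: "\<And>x. \<bar>\<phi> x\<bar> \<le> B" using bounded_lim[OF cont H1_top H1_bot] by blast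
  have Vb: "\<bar>V x\<bar> \<le> 2 * \<bar>\<nu>\<bar> * B + 3 * B^2 + \<bar>\<mu>\<bar>" for x
  proof -
    have "\<bar>V x\<bar> \<le> \<bar>2 * \<nu> * \<phi> x\<bar> + \<bar>3 * (\<phi> x)^2\<bar> + \<bar>\<mu>\<bar>"
      unfolding V_def deriv_f by linarith
    moreover have "\<bar>2 * \<nu> * \<phi> x\<bar> \<le> 2 * \<bar>\<nu>\<bar> * B"
      using B[of x] by (simp add: abs_mult mult_left_mono)
    moreover have "\<bar>3 * (\<phi> x)^2\<bar> \<le> 3 * B^2"
      using B[of x] by (simp add: abs_mult) (metis abs_ge_zero power2_abs power_mono)
    ultimately show ?thesis by linarith
  qed
  have Vlt: "\<bar>V x\<bar> < lam_inf" for x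
  proof -
    have "\<bar>V x\<bar> \<le> (SUP x. \<bar>V x\<bar>)"
      by (rule cSUP_upper) (use Vb in \<open>auto intro!: bdd_aboveI2\<close>)
    then show ?thesis using lam unfolding V_def by simp
  qed
  have part1: "SH_Eu \<nu> \<mu> \<phi> s lam_inf \<inter> ell_sand = {0}" for s
  proof -
    have "x = 0" if x: "x \<in> SH_Eu \<nu> \<mu> \<phi> s lam_inf" "x \<in> ell_sand" for x
    proof -
      obtain q where q: "x = q s" "\<And>y. (q has_vector_derivative (SH_B \<nu> \<mu> \<phi> y lam_inf *v q y)) (at y)"
        "(q \<longlongrightarrow> 0) at_bot"
        using x(1) unfolding SH_Eu_def by blast
      have "q s = 0"
      proof (rule lyap[where c = "\<lambda>y. - lam_inf - 1 + V y"])
        show "(q has_vector_derivative (Mc (- lam_inf - 1 + V y) *v q y)) (at y)" for y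
          using q(2)[of y] unfolding B_Mc V_def .
        show "- lam_inf - 1 + V y < -1" for y using Vlt[of y] by simp
      qed (use q x(2) in \<open>auto simp: ell_sand_def\<close>)
      then show ?thesis using q(1) by simp
    qed
    moreover have "0 \<in> SH_Eu \<nu> \<mu> \<phi> s lam_inf"
      unfolding SH_Eu_def by (auto intro!: exI[of _ "\<lambda>_. 0"])
    moreover have "(0::real^4) \<in> ell_sand" by (simp add: ell_sand_def)
    ultimately show ?thesis by blast
  qed
  have "lam_inf > 0" using Vlt[of 0] by simp
  then have "- lam_inf - 1 + deriv (SH_f \<nu> \<mu>) 0 < -1" using H2 by simp
  from unstable_zero[OF this] have "unstable_subspace (SH_B_inf \<nu> \<mu> lam_inf) \<inter> ell_sand = {0}"
    unfolding Binf_Mc .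
  with part1 show ?thesis by blast
qed

end
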